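(* Let $p$ be an odd prime, $q$ a power of $p$, $E/\mathbb F_p$ a finite extension, $\psi$ a nontrivial additive character of $\mathbb F_p$, and $\tilde f(x)=\sum_{i=0}^na_ix^{(q^i+1)/2}$ with $a_i\in E$. Let $\mathbb K$ be the unique quadratic subfield of $\mathbb Q(\zeta_p)$ and $\mathrm{Gauss}_{\mathbb F_p}$ a quadratic Gauss sum over $\mathbb F_p$. Then the sums $$S_{\tilde f,+}=\frac{-1}{(\mathrm{Gauss}_{\mathbb F_p})^{\deg(E/\mathbb F_p)}}\sum_{x\in E}\psi_E(\tilde f(x)),\qquad S_{\tilde f,-}=\frac{-1}{(\mathrm{Gauss}_{\mathbb F_p})^{\deg(E/\mathbb F_p)}}\sum_{x\in E}\psi_E(\tilde f(x))\chi_2(x)$$ both lie in $\mathbb K$. If moreover $q$ is a square and $E\supseteq\mathbb F_q$, both lie in $\mathbb Q$.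
   Context: $\psi_E=\psi\circ\mathrm{Tr}_{E/\mathbb F_p}$, $\chi_2$ is the quadratic character of $E^\times$ (extended by $\chi_2(0)=0$), and $\mathrm{Gauss}_{\mathbb F_p}=\sum_{x\in\mathbb F_p^\times}\psi(x)\chi_2(x)$. *)

theory Defs
  imports "HOL-Analysis.Analysis" "HOL-Number_Theory.Number_Theory"
begin

text \<open>Absolute trace Tr_{E/F_p}(x) = sum_{i<d} x^(p^i), where |E| = p^d.\<close>
definition abs_trace :: "nat \<Rightarrow> nat \<Rightarrow> 'a::field \<Rightarrow> 'a" where
  "abs_trace p d x = (\<Sum>i<d. x ^ (p ^ i))"

definition quad_char :: "'a::field \<Rightarrow> complex" where
  "quad_char x = (if x = 0 then 0 else if (\<exists>y. y ^ 2 = x) then 1 else -1)"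

text \<open>Quadratic Gauss sum over F_p, F_p realised as the prime subfield {of_nat m | m < p}
  of E, with the quadratic character of F_p given by the Legendre symbol.\<close>
definition gauss_Fp :: "nat \<Rightarrow> ('a::field \<Rightarrow> complex) \<Rightarrow> complex" where
  "gauss_Fp p \<psi> = (\<Sum>m\<in>{1..<p}. \<psi> (of_nat m) * of_int (Legendre (int m) (int p)))"

text \<open>The unique quadratic subfield of Q(zeta_p), i.e. Q(sqrt(p*)), p* = (-1)^((p-1)/2) p.\<close>
definition quad_subfield :: "nat \<Rightarrow> complex set" where
  "quad_subfield p = {of_rat a + of_rat b * csqrt (of_int ((-1) ^ ((p - 1) div 2) * int p)) | a b. True}"

end

theory Submission imports Defs "HOL-Computational_Algebra.Polynomial" begin


lemma card_pow_eq_le: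
  fixes c :: "'a::field"
  assumes "n \<ge> 1"
  shows "card {z::'a. z ^ n = c} \<le> n"
proof -
  define P :: "'a poly" where "P = Polynomial.monom 1 n + [:-c:]"
  have ev: "poly P z = z ^ n - c" for z by (simp add: P_def poly_monom)
  have deg: "degree P = n" using assms unfolding P_def
    by (subst degree_add_eq_left) (auto simp: degree_monom_eq degree_pCons_eq_if)
  have "P \<noteq> 0" using deg assms by auto
  from card_poly_roots_bound[OF this] have "card {z. poly P z = 0} \<le> n" using deg by simp
  moreover have "{z. poly P z = 0} = {z. z ^ n = c}" by (auto simp: ev)
  ultimately show ?thesis by simp
qed

lemma card_pow_eq_le2:
  assumes that: "n \<ge> 2"
  shows "card {z::'a::field. z ^ n - z = 0} \<le> n"
proof -
  define P :: "'a poly" where "P = Polynomial.monom 1 n + [:0,-1:]"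
  have ev: "poly P z = z ^ n - z" for z by (simp add: P_def poly_monom)
  have deg: "degree P = n" using that unfolding P_def
    by (subst degree_add_eq_left) (auto simp: degree_monom_eq degree_pCons_eq_if)
  have "P \<noteq> 0" using deg that by auto
  from card_poly_roots_bound[OF this] have "card {z. poly P z = 0} \<le> n" using deg by simp
  moreover have "{z. poly P z = 0} = {z. z ^ n - z = 0}" by (auto simp: ev)
  ultimately show ?thesis by simp
qed

lemma finite_field_pow_card:
  fixes x :: "'a::{finite,field}"
  shows "x ^ card (UNIV :: 'a set) = x"
proof (cases "x = 0")
  case False
  have "x * (\<Prod>y\<in>UNIV-{0}. x * y) = x * x ^ (card (UNIV :: 'a set) - 1) * \<Prod>(UNIV-{0})"
    by (simp add: prod.distrib mult_ac)
  also have "x * x ^ (card (UNIV :: 'a set) - 1) = x ^ Suc (card (UNIV :: 'a set) - 1)"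
    by (subst power_Suc) auto
  also have "Suc (card (UNIV :: 'a set) - 1) = card (UNIV :: 'a set)"
    using finite_UNIV_card_ge_0[where ?'a = 'a] by simp
  also have "(\<Prod>y\<in>UNIV-{0}. x * y) = (\<Prod>y\<in>UNIV-{0}. y)"
    by (rule prod.reindex_bij_witness[of _ "\<lambda>y. y / x" "\<lambda>y. x * y"]) (use False in auto)
  finally show ?thesis
    by simp
qed (use finite_UNIV_card_ge_0[where ?'a = 'a] in auto)

locale ffield =
  fixes p :: nat and dummy :: "'a::{finite,field}"
  assumes prime_p: "prime p" and odd_p: "odd p" and char_p: "CHAR('a) = p"
begin

abbreviation F :: "'a set" where "F \<equiv> range of_nat"

lemma p_gt2: "p > 2"
proof -
  have "p \<ge> 2" using prime_p prime_ge_2_nat by blast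
  moreover have "p \<noteq> 2" using odd_p by auto
  ultimately show ?thesis by linarith
qed

lemma prime_char: "prime CHAR('a)" using char_p prime_p by simp

lemma of_nat_pow_p: "(of_nat m :: 'a) ^ p = of_nat m"
proof (induction m)
  case 0 show ?case using p_gt2 by simp
next
  case (Suc m)
  have "(of_nat (Suc m) :: 'a) ^ p = (of_nat m + 1) ^ p" by (simp add: add.commute)
  also have "\<dots> = of_nat m ^ p + 1 ^ p" by (rule freshmans_dream) (use prime_p char_p in auto)
  finally show ?case using Suc by simp
qed

lemma of_nat_mod: "(of_nat (m mod p) :: 'a) = of_nat m"
  using of_nat_eq_iff_cong_CHAR[where 'a='a, of "m mod p" m] char_p by (simp add: cong_def)

lemma F_eq: "F = of_nat ` {..<p}"
proof
  show "F \<subseteq> of_nat ` {..<p}"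
  proof
    fix z assume "z \<in> F" then obtain m where "z = of_nat m" by auto
    then have "z = of_nat (m mod p)" using of_nat_mod by simp
    moreover have "m mod p < p" using p_gt2 by simp
    ultimately show "z \<in> of_nat ` {..<p}" by blast
  qed
next
  show "of_nat ` {..<p} \<subseteq> F" by (rule image_mono) simp
qed

lemma inj_F: "inj_on (of_nat :: nat \<Rightarrow> 'a) {..<p}"
proof
  fix x y assume "x \<in> {..<p}" "y \<in> {..<p}" "(of_nat x :: 'a) = of_nat y"
  then have "[x = y] (mod p)" using of_nat_eq_iff_cong_CHAR[where 'a='a] char_p by simp
  then show "x = y" using \<open>x \<in> {..<p}\<close> \<open>y \<in> {..<p}\<close> by (simp add: cong_def)
qed

lemma card_F: "card F = p"
proof -
  have "card (of_nat ` {..<p} :: 'a set) = p" using card_image[OF inj_F] by simp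
  then show ?thesis using F_eq by simp
qed

lemma F_char: "F = {z. z ^ p = z}"
proof -
  have sub: "F \<subseteq> {z. z^p = z}" using of_nat_pow_p by auto
  have "card {z::'a. z^p - z = 0} \<le> p" using card_pow_eq_le2[of p] p_gt2 by simp
  then have "card {z::'a. z^p = z} \<le> p" by simp
  then have "card {z::'a. z^p = z} \<le> card F" using card_F by simp
  from card_seteq[OF _ sub this] show ?thesis by simp
qed

lemma inF: "z \<in> F \<longleftrightarrow> z ^ p = z" using F_char by auto

lemma F_add: "x \<in> F \<Longrightarrow> y \<in> F \<Longrightarrow> x + y \<in> F"
proof -
  have "(x + y) ^ p = x ^ p + y ^ p"
    by (rule freshmans_dream[where x=x and y=y and n=p, OF prime_char char_p[symmetric]])
  then show "x \<in> F \<Longrightarrow> y \<in> F \<Longrightarrow> x + y \<in> F" unfolding inF by simp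
qed

lemma F_mult: "x \<in> F \<Longrightarrow> y \<in> F \<Longrightarrow> x * y \<in> F"
  unfolding inF by (simp add: power_mult_distrib)

lemma F_inv: "x \<in> F \<Longrightarrow> inverse x \<in> F"
  unfolding inF by (simp add: power_inverse)

lemma F_div: "x \<in> F \<Longrightarrow> y \<in> F \<Longrightarrow> x / y \<in> F"
  unfolding divide_inverse using F_mult F_inv by blast

lemma F_uminus: "x \<in> F \<Longrightarrow> - x \<in> F"
proof -
  have "(- x) ^ p = - (x ^ p)" by (rule minus_power_prime_CHAR[OF char_p[symmetric] prime_p])
  then show "x \<in> F \<Longrightarrow> - x \<in> F" unfolding inF by simp
qed

lemma F_diff: "x \<in> F \<Longrightarrow> y \<in> F \<Longrightarrow> x - y \<in> F"
  using F_add[OF _ F_uminus[of y]] by simp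

lemma F_0: "0 \<in> F" and F_1: "1 \<in> F"
proof -
  have "(of_nat 0 :: 'a) \<in> F" "(of_nat 1 :: 'a) \<in> F" by (rule rangeI)+
  then show "0 \<in> F" "1 \<in> F" by simp_all
qed

lemma F_of_int: "(of_int z :: 'a) \<in> F"
proof -
  have "(of_int z :: 'a) = of_int (z mod int p)"
    using of_int_eq_iff_cong_CHAR[where 'a='a] char_p by (simp add: cong_def)
  also have "\<dots> = of_nat (nat (z mod int p))"
    by (subst of_nat_nat) (use p_gt2 in simp_all)
  finally show ?thesis by simp
qed

lemma F_pow: "c \<in> F \<Longrightarrow> c ^ (p ^ j) = c"
proof (induction j)
  case (Suc j)
  have "c ^ (p ^ Suc j) = (c ^ p) ^ (p ^ j)" by (simp add: power_mult mult.commute)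
  then show ?case using Suc inF by simp
qed simp

lemma F_fermat: "c \<in> F \<Longrightarrow> c \<noteq> 0 \<Longrightarrow> c ^ (p - 1) = 1"
proof -
  assume "c \<in> F" "c \<noteq> 0"
  moreover have "c ^ p = c * c ^ (p - 1)" using p_gt2
  proof -
    have "p = Suc (p - 1)" using p_gt2 by simp
    then have "c ^ p = c ^ Suc (p - 1)" by (rule arg_cong)
    then show ?thesis by simp
  qed
  ultimately have "c * c ^ (p - 1) = c * 1" using inF by simp
  then show ?thesis using \<open>c \<noteq> 0\<close> by simp
qed

lemma card_F0: "card (F - {0}) = p - 1"
proof -
  have "card (F - {0}) = card F - 1" by (rule card_Diff_singleton) (simp_all add: F_0)
  then show ?thesis using card_F by simp
qed

end


context ffield begin

definition chi :: "'a \<Rightarrow> int" where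
  "chi y = (if y = 0 then 0 else if y ^ ((p - 1) div 2) = 1 then 1 else -1)"

lemma e_pos: "(p - 1) div 2 \<ge> 1" using p_gt2 by linarith

lemma one_neq_minus_one: "(1::'a) \<noteq> -1"
proof
  assume "(1::'a) = -1"
  then have "(of_nat 2 :: 'a) = 0" by (metis add_eq_0_iff2 mult_2 mult_2_right of_nat_1 of_nat_add one_add_one)
  then have "CHAR('a) dvd 2" using of_nat_eq_0_iff_char_dvd by blast
  then have "p dvd 2" using char_p by simp
  then have "p \<le> 2" by (simp add: dvd_imp_le)
  then show False using p_gt2 by simp
qed

lemma of_int_inj_small:
  assumes "a \<in> {-1,0,1}" "b \<in> {-1,0,1}" "(of_int a :: 'a) = of_int b"
  shows "a = b"
proof (rule ccontr)
  assume ne: "a \<noteq> b"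
  from assms(3) have "[a = b] (mod int CHAR('a))" using of_int_eq_iff_cong_CHAR by blast
  then have "int p dvd (a - b)" using char_p by (simp add: cong_iff_dvd_diff)
  then have "\<bar>int p\<bar> \<le> \<bar>a - b\<bar>" using ne by (intro dvd_imp_le_int) auto
  moreover have "\<bar>a - b\<bar> \<le> 2" using assms(1,2) by auto
  ultimately show False using p_gt2 by simp
qed

lemma Legendre_vals: "Legendre a b \<in> {-1,0,1}"
  unfolding Legendre_def by auto

lemma chi_vals: "chi y \<in> {-1,0,1}"
  unfolding chi_def by auto

lemma euler_F: "(of_int (Legendre (int m) (int p)) :: 'a) = of_nat m ^ ((p - 1) div 2)"
proof -
  have "[Legendre (int m) (int p) = (int m) ^ ((p - 1) div 2)] (mod int p)"
    by (rule euler_criterion) (use prime_p p_gt2 in auto)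
  then have "[Legendre (int m) (int p) = (int m) ^ ((p - 1) div 2)] (mod int CHAR('a))"
    using char_p by simp
  then have "(of_int (Legendre (int m) (int p)) :: 'a) = of_int ((int m) ^ ((p - 1) div 2))"
    using of_int_eq_iff_cong_CHAR[where 'a='a] by blast
  then show ?thesis by simp
qed

lemma chi_of_nat: "chi (of_nat m) = Legendre (int m) (int p)"
proof -
  define L where "L = Legendre (int m) (int p)"
  define y :: 'a where "y = of_nat m"
  have ey: "of_int L = y ^ ((p - 1) div 2)" unfolding L_def y_def by (rule euler_F)
  have L: "L \<in> {-1,0,1}" unfolding L_def by (rule Legendre_vals)
  have epos: "(p - 1) div 2 \<noteq> 0" using e_pos by simp
  show ?thesis
  proof -
    { assume "L = 0"
      then have "y = 0" using ey epos by simp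
      then have "chi y = L" using \<open>L = 0\<close> by (simp add: chi_def) }
    moreover
    { assume "L = 1"
      then have "y ^ ((p - 1) div 2) = 1" using ey by simp
      moreover have "y \<noteq> 0"
      proof
        assume "y = 0" then have "y ^ ((p - 1) div 2) = 0" using epos by (simp add: power_0_left)
        with \<open>y ^ ((p - 1) div 2) = 1\<close> show False by simp
      qed
      ultimately have "chi y = L" using \<open>L = 1\<close> by (simp add: chi_def) }
    moreover
    { assume "L = -1"
      then have "y ^ ((p - 1) div 2) = -1" using ey by simp
      moreover have "y \<noteq> 0"
      proof
        assume "y = 0" then have "y ^ ((p - 1) div 2) = 0" using epos by (simp add: power_0_left)
        with \<open>y ^ ((p - 1) div 2) = -1\<close> show False by simp
      qed
      ultimately have "chi y = L" using \<open>L = -1\<close> one_neq_minus_one by (auto simp add: chi_def) }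
    ultimately show ?thesis using L unfolding L_def y_def by blast
  qed
qed

lemma chi_pow: "y \<in> F \<Longrightarrow> of_int (chi y) = y ^ ((p - 1) div 2)"
  using chi_of_nat euler_F by auto

lemma chi_mult: "x \<in> F \<Longrightarrow> y \<in> F \<Longrightarrow> chi (x * y) = chi x * chi y"
proof -
  assume xy: "x \<in> F" "y \<in> F"
  have "(of_int (chi (x * y)) :: 'a) = (x * y) ^ ((p - 1) div 2)" using chi_pow F_mult xy by blast
  also have "\<dots> = of_int (chi x * chi y)" using chi_pow xy by (simp add: power_mult_distrib)
  finally have eq: "(of_int (chi (x * y)) :: 'a) = of_int (chi x * chi y)" .
  have "chi x * chi y \<in> {-1,0,1}" using chi_vals[of x] chi_vals[of y] by auto
  from of_int_inj_small[OF chi_vals this eq] show ?thesis .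
qed

lemma chi_0: "chi 0 = 0" and chi_1: "chi 1 = 1"
  by (simp_all add: chi_def)

lemma chi_nz: "y \<noteq> 0 \<Longrightarrow> chi y = 1 \<or> chi y = -1"
  by (auto simp add: chi_def)

lemma chi_minus1: "chi (-1) = (-1) ^ ((p - 1) div 2)"
proof -
  have "(of_int (chi (-1)) :: 'a) = (-1) ^ ((p - 1) div 2)" using chi_pow F_uminus[OF F_1] by blast
  also have "\<dots> = of_int ((-1) ^ ((p - 1) div 2))" by simp
  finally have eq: "(of_int (chi (-1)) :: 'a) = of_int ((-1) ^ ((p - 1) div 2))" .
  have "((-1::int) ^ ((p - 1) div 2)) \<in> {-1,0,1}" by (cases "even ((p - 1) div 2)"; simp)
  from of_int_inj_small[OF chi_vals this eq] show ?thesis .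
qed

lemma chi_sqrt:
  assumes "y \<in> F" "chi y = 1"
  shows "\<exists>t\<in>F. t \<noteq> 0 \<and> t * t = y"
proof -
  obtain m where y: "y = of_nat m" using assms(1) by auto
  have "Legendre (int m) (int p) = 1" using assms(2) chi_of_nat y by simp
  then have "QuadRes (int p) (int m)" unfolding Legendre_def by (auto split: if_splits)
  then obtain z where z: "[z ^ 2 = int m] (mod int p)" unfolding QuadRes_def by blast
  then have "[z ^ 2 = int m] (mod int CHAR('a))"
    using char_p by simp
  then have "(of_int (z ^ 2) :: 'a) = of_int (int m)"
    using of_int_eq_iff_cong_CHAR[where 'a='a] by blast
  then have "of_int z * of_int z = y" using y by (simp add: power2_eq_square)
  moreover have "y \<noteq> 0" using assms(2) by (auto simp: chi_def)
  ultimately show ?thesis using F_of_int by (metis mult_zero_left)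
qed

lemma nonres: "\<exists>g\<in>F. chi g = -1"
proof (rule ccontr)
  assume "\<not> ?thesis"
  then have "\<forall>y\<in>F - {0}. chi y = 1" using chi_nz by blast
  then have sub: "F - {0} \<subseteq> {z. z ^ ((p - 1) div 2) = 1}"
    using chi_pow by (metis (mono_tags, lifting) DiffD1 mem_Collect_eq of_int_1 subsetI)
  have "card (F - {0}) \<le> card {z::'a. z ^ ((p - 1) div 2) = 1}"
    by (rule card_mono[OF _ sub]) simp
  also have "\<dots> \<le> (p - 1) div 2" using card_pow_eq_le e_pos by blast
  finally show False using card_F0 p_gt2 by linarith
qed

lemma F0_mult: "g \<in> F - {0} \<Longrightarrow> y \<in> F - {0} \<Longrightarrow> g * y \<in> F - {0}"
  using F_mult by auto
lemma F0_div: "g \<in> F - {0} \<Longrightarrow> y \<in> F - {0} \<Longrightarrow> y / g \<in> F - {0}"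
  using F_div by auto

lemma sum_F0_mult:
  assumes "g \<in> F - {0}"
  shows "(\<Sum>y\<in>F - {0}. h (g * y)) = (\<Sum>y\<in>F - {0}. h y)"
  by (rule sum.reindex_bij_witness[of _ "\<lambda>y. y / g" "\<lambda>y. g * y"])
     (use assms F0_mult F0_div in auto)

lemma sum_F_mult:
  assumes "g \<in> F - {0}"
  shows "(\<Sum>y\<in>F. h (g * y)) = (\<Sum>y\<in>F. h y)"
  by (rule sum.reindex_bij_witness[of _ "\<lambda>y. y / g" "\<lambda>y. g * y"])
     (use assms F_mult F_div in auto)

lemma sum_chi: "(\<Sum>y\<in>F - {0}. chi y) = 0"
proof -
  obtain g where g: "g \<in> F" "chi g = -1" using nonres by blast
  then have g0: "g \<in> F - {0}" using chi_0 by auto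
  have "(\<Sum>y\<in>F - {0}. chi y) = (\<Sum>y\<in>F - {0}. chi (g * y))" using sum_F0_mult[OF g0, of chi] by simp
  also have "\<dots> = (\<Sum>y\<in>F - {0}. - chi y)" using chi_mult g by (intro sum.cong) auto
  finally show ?thesis by (simp add: sum_negf)
qed

end



locale gs = ffield p dummy for p and dummy :: "'a::{finite,field}" +
  fixes \<psi> :: "'a \<Rightarrow> complex"
  assumes psi_add: "\<forall>x\<in>range of_nat. \<forall>y\<in>range of_nat. \<psi> (x + y) = \<psi> x * \<psi> y"
    and psi_nontriv: "\<exists>x\<in>range of_nat. \<psi> x \<noteq> 1"
    and psi0: "\<psi> 0 = 1"
begin

lemma psi_add': "x \<in> F \<Longrightarrow> y \<in> F \<Longrightarrow> \<psi> (x + y) = \<psi> x * \<psi> y"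
  using psi_add by blast

lemma sum_psi: "(\<Sum>y\<in>F. \<psi> y) = 0"
proof -
  obtain y0 where y0: "y0 \<in> F" "\<psi> y0 \<noteq> 1" using psi_nontriv by blast
  have "(\<Sum>y\<in>F. \<psi> (y0 + y)) = (\<Sum>y\<in>F. \<psi> y)"
    by (rule sum.reindex_bij_witness[of _ "\<lambda>y. y - y0" "\<lambda>y. y0 + y"])
       (use y0 F_add F_diff in auto)
  moreover have "(\<Sum>y\<in>F. \<psi> (y0 + y)) = \<psi> y0 * (\<Sum>y\<in>F. \<psi> y)"
    using psi_add' y0(1) by (simp add: sum_distrib_left)
  ultimately have "(1 - \<psi> y0) * (\<Sum>y\<in>F. \<psi> y) = 0" by (simp add: algebra_simps)
  then show ?thesis using y0(2) by simp
qed

lemma sum_psi_scaled: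
  assumes "c \<in> F"
  shows "(\<Sum>y\<in>F - {0}. \<psi> (c * y)) = (if c = 0 then of_nat (p - 1) else -1)"
proof (cases "c = 0")
  case True
  then show ?thesis using psi0 card_F0 by simp
next
  case False
  have "(\<Sum>y\<in>F. \<psi> (c * y)) = 0" using sum_F_mult[of c \<psi>] assms False sum_psi by simp
  moreover have "(\<Sum>y\<in>F. \<psi> (c * y)) = \<psi> (c * 0) + (\<Sum>y\<in>F - {0}. \<psi> (c * y))"
    by (rule sum.remove) (simp_all add: F_0)
  ultimately have "1 + (\<Sum>y\<in>F - {0}. \<psi> (c * y)) = 0" using psi0 by simp
  then have "(\<Sum>y\<in>F - {0}. \<psi> (c * y)) = -1" by (simp add: add.commute eq_neg_iff_add_eq_0)
  then show ?thesis using False by simp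
qed

definition G :: complex where "G = (\<Sum>y\<in>F - {0}. \<psi> y * of_int (chi y))"

lemma F0_image: "of_nat ` {1..<p} = F - {0}"
proof
  show "of_nat ` {1..<p} \<subseteq> F - {0}"
  proof
    fix z assume "z \<in> (of_nat ` {1..<p} :: 'a set)"
    then obtain m where m: "m \<in> {1..<p}" "z = of_nat m" by auto
    have "z \<noteq> 0"
    proof
      assume "z = 0"
      then have "(of_nat m :: 'a) = 0" using m(2) by simp
      then have "CHAR('a) dvd m" by (simp only: of_nat_eq_0_iff_char_dvd)
      then have "p dvd m" using char_p by simp
      moreover have "m > 0" "m < p" using m by auto
      ultimately show False using dvd_imp_le[of p m] by linarith
    qed
    then show "z \<in> F - {0}" using m by simp
  qed
next
  show "F - {0} \<subseteq> of_nat ` {1..<p}"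
  proof
    fix z assume z: "z \<in> F - {0}"
    have "z \<in> of_nat ` {..<p}" using z F_eq by (metis DiffD1)
    then obtain m where m: "m \<in> {..<p}" "z = of_nat m" by (rule imageE)
    have "m \<noteq> 0"
    proof
      assume "m = 0" then have "z = 0" using m(2) by simp
      then show False using z by simp
    qed
    then have "m \<in> {1..<p}" using m by auto
    then show "z \<in> of_nat ` {1..<p}" using m(2) by (rule rev_image_eqI)
  qed
qed

lemma gauss_eq: "gauss_Fp p \<psi> = G"
proof -
  have inj: "inj_on (of_nat :: nat \<Rightarrow> 'a) {1..<p}"
    by (rule inj_on_subset[OF inj_F]) auto
  have "gauss_Fp p \<psi> = (\<Sum>m\<in>{1..<p}. \<psi> (of_nat m) * of_int (chi (of_nat m)))"
    unfolding gauss_Fp_def by (intro sum.cong refl) (simp only: chi_of_nat)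
  also have "\<dots> = (\<Sum>y\<in>of_nat ` {1..<p}. \<psi> y * of_int (chi y))"
    by (rule sum.reindex[OF inj, symmetric, unfolded comp_def])
  also have "\<dots> = G" unfolding G_def F0_image ..
  finally show ?thesis .
qed

lemma chi_sq: "a \<in> F - {0} \<Longrightarrow> chi a * chi a = 1"
proof -
  assume a: "a \<in> F - {0}"
  then have "chi a = 1 \<or> chi a = -1" using chi_nz by blast
  then show ?thesis by auto
qed

lemma sum_F0_neg: "(\<Sum>y\<in>F - {0}. h (- y)) = (\<Sum>y\<in>F - {0}. h y)"
  by (rule sum.reindex_bij_witness[of _ uminus uminus]) (use F_uminus in auto)

lemma Gm_eq: "(\<Sum>b\<in>F - {0}. \<psi> (- b) * of_int (chi b)) = of_int (chi (-1)) * G"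
proof -
  have m1: "(-1::'a) \<in> F" using F_uminus[OF F_1] by simp
  have "(\<Sum>b\<in>F - {0}. \<psi> (- b) * of_int (chi b)) = (\<Sum>b\<in>F - {0}. \<psi> (- (- b)) * of_int (chi (- b)))"
    using sum_F0_neg[of "\<lambda>b. \<psi> (- b) * of_int (chi b)"] by (rule sym)
  also have "\<dots> = (\<Sum>b\<in>F - {0}. of_int (chi (-1)) * (\<psi> b * of_int (chi b)))"
  proof (intro sum.cong refl)
    fix b assume b: "b \<in> F - {0}"
    have "chi (- b) = chi (-1) * chi b" using chi_mult[OF m1, of b] b by simp
    then show "\<psi> (- (- b)) * of_int (chi (- b)) = of_int (chi (-1)) * (\<psi> b * of_int (chi b))"
      by simp
  qed
  finally show ?thesis unfolding G_def by (simp add: sum_distrib_left)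
qed

end


context gs begin

lemma G_sq: "G ^ 2 = of_int (chi (-1)) * of_nat p"
proof -
  define Gm where "Gm = (\<Sum>b\<in>F - {0}. \<psi> (- b) * of_int (chi b))"
  have Gm: "Gm = of_int (chi (-1)) * G" unfolding Gm_def by (rule Gm_eq)
  have m1: "(-1::'a) \<in> F - {0}" using F_uminus[OF F_1] by simp
  have inner: "(\<Sum>b\<in>F - {0}. (\<psi> a * of_int (chi a)) * (\<psi> (- b) * of_int (chi b)))
      = (\<Sum>t\<in>F - {0}. \<psi> ((1 - t) * a) * of_int (chi t))" if a: "a \<in> F - {0}" for a
  proof -
    have "(\<Sum>b\<in>F - {0}. (\<psi> a * of_int (chi a)) * (\<psi> (- b) * of_int (chi b)))
        = (\<Sum>t\<in>F - {0}. (\<psi> a * of_int (chi a)) * (\<psi> (- (a * t)) * of_int (chi (a * t))))"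
      by (rule sum_F0_mult[OF a, of "\<lambda>b. (\<psi> a * of_int (chi a)) * (\<psi> (- b) * of_int (chi b))", symmetric])
    also have "\<dots> = (\<Sum>t\<in>F - {0}. \<psi> ((1 - t) * a) * of_int (chi t))"
    proof (intro sum.cong refl)
      fix t assume t: "t \<in> F - {0}"
      have aF: "a \<in> F" and tF: "t \<in> F" using a t by auto
      have "\<psi> a * \<psi> (- (a * t)) = \<psi> (a + - (a * t))"
        using psi_add'[OF aF F_uminus[OF F_mult[OF aF tF]]] by (rule sym)
      also have "a + - (a * t) = (1 - t) * a" by (simp add: algebra_simps)
      finally have 1: "\<psi> a * \<psi> (- (a * t)) = \<psi> ((1 - t) * a)" .
      have "chi a * chi (a * t) = chi a * (chi a * chi t)" using chi_mult[OF aF tF] by simp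
      also have "\<dots> = (chi a * chi a) * chi t" by (simp only: mult.assoc)
      also have "\<dots> = chi t" using chi_sq[OF a] by simp
      finally have 2: "chi a * chi (a * t) = chi t" .
      have "(\<psi> a * of_int (chi a)) * (\<psi> (- (a * t)) * of_int (chi (a * t)))
          = (\<psi> a * \<psi> (- (a * t))) * of_int (chi a * chi (a * t))" by (simp add: algebra_simps)
      also have "\<dots> = \<psi> ((1 - t) * a) * of_int (chi t)" by (simp only: 1 2)
      finally show "(\<psi> a * of_int (chi a)) * (\<psi> (- (a * t)) * of_int (chi (a * t)))
          = \<psi> ((1 - t) * a) * of_int (chi t)" .
    qed
    finally show ?thesis .
  qed
  have "G * Gm = (\<Sum>a\<in>F - {0}. \<Sum>b\<in>F - {0}. (\<psi> a * of_int (chi a)) * (\<psi> (- b) * of_int (chi b)))"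
    unfolding G_def Gm_def by (rule sum_product)
  also have "\<dots> = (\<Sum>a\<in>F - {0}. \<Sum>t\<in>F - {0}. \<psi> ((1 - t) * a) * of_int (chi t))"
    by (intro sum.cong refl inner)
  also have "\<dots> = (\<Sum>t\<in>F - {0}. \<Sum>a\<in>F - {0}. \<psi> ((1 - t) * a) * of_int (chi t))"
    by (rule sum.swap)
  also have "\<dots> = (\<Sum>t\<in>F - {0}. of_int (chi t) * (\<Sum>a\<in>F - {0}. \<psi> ((1 - t) * a)))"
    by (simp add: sum_distrib_left mult.commute)
  also have "\<dots> = (\<Sum>t\<in>F - {0}. - of_int (chi t) + (if t = 1 then of_nat p else 0))"
  proof (intro sum.cong refl)
    fix t assume t: "t \<in> F - {0}"
    have "1 - t \<in> F" using F_diff[OF F_1] t by auto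
    then have S: "(\<Sum>a\<in>F - {0}. \<psi> ((1 - t) * a)) = (if 1 - t = 0 then of_nat (p - 1) else -1)"
      by (rule sum_psi_scaled)
    show "of_int (chi t) * (\<Sum>a\<in>F - {0}. \<psi> ((1 - t) * a)) = - of_int (chi t) + (if t = 1 then of_nat p else 0)"
    proof (cases "t = 1")
      case True
      have "of_nat (p - 1) = (of_nat p - 1 :: complex)" using p_gt2 by (simp add: of_nat_diff)
      then show ?thesis using True S chi_1 by simp
    next
      case False
      then have "1 - t \<noteq> 0" by simp
      then show ?thesis using False S by simp
    qed
  qed
  also have "\<dots> = - (\<Sum>t\<in>F - {0}. of_int (chi t)) + (\<Sum>t\<in>F - {0}. (if t = 1 then of_nat p else 0))"
    by (simp only: sum.distrib sum_negf)
  also have "(\<Sum>t\<in>F - {0}. (if t = 1 then of_nat p else 0)) = (of_nat p :: complex)"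
    using F_1 by (simp add: sum.delta)
  also have "(\<Sum>t\<in>F - {0}. (of_int (chi t) :: complex)) = of_int (\<Sum>t\<in>F - {0}. chi t)"
    by simp
  also have "\<dots> = 0" using sum_chi by simp
  finally have GGm: "G * Gm = of_nat p" by simp
  have c2: "(of_int (chi (-1)) :: complex) * of_int (chi (-1)) = 1"
    using chi_sq[OF m1] by (metis of_int_1 of_int_mult)
  have "of_int (chi (-1)) * (G * Gm) = of_int (chi (-1)) * of_nat p" using GGm by simp
  moreover have "of_int (chi (-1)) * (G * Gm) = G ^ 2"
    using c2 unfolding Gm by (simp add: power2_eq_square algebra_simps)
  ultimately show ?thesis by simp
qed

end


context gs begin

lemma orbit_decomp:
  fixes T :: "'a \<Rightarrow> 'a" and w :: "'a \<Rightarrow> int"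
  assumes TF: "\<And>x. T x \<in> F"
  shows "(\<Sum>x\<in>UNIV. \<psi> (T x) * of_int (w x)) = (\<Sum>y\<in>F. \<psi> y * of_int (\<Sum>x\<in>{x. T x = y}. w x))"
proof -
  have "(\<Sum>x\<in>UNIV. \<psi> (T x) * of_int (w x)) = (\<Sum>y\<in>F. \<Sum>x\<in>{x. x \<in> UNIV \<and> T x = y}. \<psi> (T x) * of_int (w x))"
    by (rule sum.group[symmetric]) (use TF in auto)
  also have "\<dots> = (\<Sum>y\<in>F. \<psi> y * of_int (\<Sum>x\<in>{x. T x = y}. w x))"
  proof (intro sum.cong refl)
    fix y assume "y \<in> F"
    have "(\<Sum>x\<in>{x. x \<in> UNIV \<and> T x = y}. \<psi> (T x) * of_int (w x)) = (\<Sum>x\<in>{x. T x = y}. \<psi> y * of_int (w x))"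
      by (intro sum.cong) auto
    also have "\<dots> = \<psi> y * of_int (\<Sum>x\<in>{x. T x = y}. w x)" by (simp add: sum_distrib_left)
    finally show "(\<Sum>x\<in>{x. x \<in> UNIV \<and> T x = y}. \<psi> (T x) * of_int (w x)) = \<psi> y * of_int (\<Sum>x\<in>{x. T x = y}. w x)" .
  qed
  finally show ?thesis .
qed

lemma N_inv:
  fixes T :: "'a \<Rightarrow> 'a" and w :: "'a \<Rightarrow> int"
  assumes c: "c \<noteq> 0" and inv: "\<And>x. T (c * x) = c * T x" and winv: "\<And>x. w (c * x) = w x"
  shows "(\<Sum>x\<in>{x. T x = c * y}. w x) = (\<Sum>x\<in>{x. T x = y}. w x)"
proof -
  have "(\<Sum>x\<in>{x. T x = y}. w x) = (\<Sum>x\<in>{x. T x = c * y}. w x)"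
  proof (rule sum.reindex_bij_witness[of _ "\<lambda>x. x / c" "\<lambda>x. c * x"])
    fix a assume "a \<in> {x. T x = y}"
    then show "c * a \<in> {x. T x = c * y}" using inv by simp
  next
    fix b assume b: "b \<in> {x. T x = c * y}"
    have "T b = T (c * (b / c))" using c by simp
    also have "\<dots> = c * T (b / c)" by (rule inv)
    finally have "c * T (b / c) = c * y" using b by simp
    then show "b / c \<in> {x. T x = y}" using c by simp
  qed (use c winv in auto)
  then show ?thesis by simp
qed

lemma K_form:
  fixes T :: "'a \<Rightarrow> 'a" and w :: "'a \<Rightarrow> int"
  assumes TF: "\<And>x. T x \<in> F"
    and inv: "\<And>c x. c \<in> F - {0} \<Longrightarrow> chi c = 1 \<Longrightarrow> T (c * x) = c * T x \<and> w (c * x) = w x"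
  shows "\<exists>a b. a \<in> \<rat> \<and> b \<in> \<rat> \<and> (\<Sum>x\<in>UNIV. \<psi> (T x) * of_int (w x)) = a + b * G"
proof -
  define N where "N y = (\<Sum>x\<in>{x. T x = y}. w x)" for y
  obtain g where g: "g \<in> F" "chi g = -1" using nonres by blast
  have g0: "g \<noteq> 0" using g chi_0 by auto
  define A :: complex where "A = (of_int (N 1) + of_int (N g)) / 2"
  define B :: complex where "B = (of_int (N 1) - of_int (N g)) / 2"
  have Ny: "of_int (N y) = A + B * of_int (chi y)" if y: "y \<in> F - {0}" for y
  proof -
    have "chi y = 1 \<or> chi y = -1" using chi_nz y by blast
    then show ?thesis
    proof
      assume c1: "chi y = 1"
      have "N (y * 1) = N 1" unfolding N_def
        by (rule N_inv) (use y inv[OF y c1] in auto)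
      then show ?thesis using c1 unfolding A_def B_def by (simp add: field_simps)
    next
      assume c2: "chi y = -1"
      define c where "c = y / g"
      have cF: "c \<in> F - {0}" unfolding c_def using F_div[of y g] y g g0 by auto
      have "chi c * chi g = chi (c * g)" using chi_mult cF g by auto
      also have "c * g = y" unfolding c_def using g0 by simp
      finally have "chi c = 1" using c2 g by simp
      have "N (c * g) = N g" unfolding N_def
        by (rule N_inv) (use cF inv[OF cF \<open>chi c = 1\<close>] in auto)
      then have "N y = N g" using \<open>c * g = y\<close> by simp
      then show ?thesis using c2 unfolding A_def B_def by (simp add: field_simps)
    qed
  qed
  have "(\<Sum>x\<in>UNIV. \<psi> (T x) * of_int (w x)) = (\<Sum>y\<in>F. \<psi> y * of_int (N y))"
    unfolding N_def by (rule orbit_decomp[OF TF])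
  also have "\<dots> = \<psi> 0 * of_int (N 0) + (\<Sum>y\<in>F - {0}. \<psi> y * of_int (N y))"
    by (rule sum.remove) (simp_all add: F_0)
  also have "(\<Sum>y\<in>F - {0}. \<psi> y * of_int (N y)) = (\<Sum>y\<in>F - {0}. A * \<psi> (1 * y) + B * (\<psi> y * of_int (chi y)))"
    by (intro sum.cong refl) (simp add: Ny algebra_simps)
  also have "\<dots> = A * (\<Sum>y\<in>F - {0}. \<psi> (1 * y)) + B * G"
    unfolding G_def by (simp add: sum.distrib sum_distrib_left)
  also have "(\<Sum>y\<in>F - {0}. \<psi> (1 * y)) = -1" using sum_psi_scaled[OF F_1] by simp
  finally have eq: "(\<Sum>x\<in>UNIV. \<psi> (T x) * of_int (w x)) = (of_int (N 0) - A) + B * G" using psi0 by simp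
  have "of_int (N 0) - A \<in> \<rat>" "B \<in> \<rat>" unfolding A_def B_def by auto
  then show ?thesis using eq by blast
qed

lemma Q_form:
  fixes T :: "'a \<Rightarrow> 'a" and w :: "'a \<Rightarrow> int"
  assumes TF: "\<And>x. T x \<in> F"
    and inv: "\<And>c x. c \<in> F - {0} \<Longrightarrow> T (c * x) = c * T x \<and> w (c * x) = w x"
  shows "(\<Sum>x\<in>UNIV. \<psi> (T x) * of_int (w x)) \<in> \<rat>"
proof -
  define N where "N y = (\<Sum>x\<in>{x. T x = y}. w x)" for y
  have Ny: "N y = N 1" if y: "y \<in> F - {0}" for y
  proof -
    have "N (y * 1) = N 1" unfolding N_def
      by (rule N_inv) (use y inv[OF y] in auto)
    then show ?thesis by simp
  qed
  have "(\<Sum>x\<in>UNIV. \<psi> (T x) * of_int (w x)) = (\<Sum>y\<in>F. \<psi> y * of_int (N y))"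
    unfolding N_def by (rule orbit_decomp[OF TF])
  also have "\<dots> = \<psi> 0 * of_int (N 0) + (\<Sum>y\<in>F - {0}. \<psi> y * of_int (N y))"
    by (rule sum.remove) (simp_all add: F_0)
  also have "(\<Sum>y\<in>F - {0}. \<psi> y * of_int (N y)) = (\<Sum>y\<in>F - {0}. of_int (N 1) * \<psi> (1 * y))"
    by (intro sum.cong refl) (simp add: Ny)
  also have "\<dots> = of_int (N 1) * (\<Sum>y\<in>F - {0}. \<psi> (1 * y))"
    by (simp add: sum_distrib_left)
  also have "(\<Sum>y\<in>F - {0}. \<psi> (1 * y)) = -1" using sum_psi_scaled[OF F_1] by simp
  finally have eq: "(\<Sum>x\<in>UNIV. \<psi> (T x) * of_int (w x)) = of_int (N 0 - N 1)" using psi0 by simp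
  then show ?thesis by simp
qed

end



lemma sum_shift_cyclic:
  fixes g :: "nat \<Rightarrow> 'b::cancel_comm_monoid_add"
  assumes "g d = g 0"
  shows "(\<Sum>i<d. g (Suc i)) = (\<Sum>i<d. g i)"
proof -
  have "g 0 + (\<Sum>i<d. g (Suc i)) = (\<Sum>i<Suc d. g i)" by (rule sum.lessThan_Suc_shift[symmetric])
  also have "\<dots> = (\<Sum>i<d. g i) + g d" by (rule sum.lessThan_Suc)
  finally show ?thesis using assms by (simp add: add.commute)
qed

lemma qc_ok:
  fixes t x :: "'a::field"
  assumes "t \<noteq> 0"
  shows "(if t * t * x = 0 then 0 else if (\<exists>y. y ^ 2 = t * t * x) then 1 else -1 :: int)
       = (if x = 0 then 0 else if (\<exists>y. y ^ 2 = x) then 1 else -1)"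
proof -
  have z: "t * t * x = 0 \<longleftrightarrow> x = 0" using assms by simp
  have s: "(\<exists>y. y ^ 2 = t * t * x) \<longleftrightarrow> (\<exists>y. y ^ 2 = x)"
  proof
    assume "\<exists>y. y ^ 2 = t * t * x"
    then obtain y where "y ^ 2 = t * t * x" by blast
    then have "(y / t) ^ 2 = x" using assms by (simp add: power2_eq_square field_simps)
    then show "\<exists>y. y ^ 2 = x" by blast
  next
    assume "\<exists>y. y ^ 2 = x"
    then obtain y where "y ^ 2 = x" by blast
    then have "(t * y) ^ 2 = t * t * x" by (simp add: power2_eq_square field_simps)
    then show "\<exists>y. y ^ 2 = t * t * x" by blast
  qed
  show ?thesis using z s by simp
qed

lemma pow_half_exp:
  fixes t :: "'a::field"
  assumes "t ^ Q = t" "odd Q"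
  shows "(t * t) ^ ((Q + 1) div 2) = t * t"
proof -
  have "2 * ((Q + 1) div 2) = Q + 1" using assms(2) by simp
  have "(t * t) ^ ((Q + 1) div 2) = t ^ (2 * ((Q + 1) div 2))" by (simp add: power_mult power2_eq_square)
  also have "\<dots> = t ^ (Q + 1)" using \<open>2 * ((Q + 1) div 2) = Q + 1\<close> by simp
  also have "\<dots> = t * t" using assms(1) by simp
  finally show ?thesis .
qed

lemma f_hom:
  fixes c x :: "'a::field"
  assumes "\<And>i. c ^ (((P ^ k) ^ i + 1) div 2) = c"
  shows "(\<Sum>i\<le>n. a i * (c * x) ^ (((P ^ k) ^ i + 1) div 2)) = c * (\<Sum>i\<le>n. a i * x ^ (((P ^ k) ^ i + 1) div 2))"
  unfolding sum_distrib_left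
proof (intro sum.cong refl)
  fix i
  show "a i * (c * x) ^ (((P ^ k) ^ i + 1) div 2) = c * (a i * x ^ (((P ^ k) ^ i + 1) div 2))"
    using assms[of i] by (simp add: power_mult_distrib algebra_simps)
qed

context ffield begin

lemma trace_F:
  assumes card: "CARD('a) = p ^ d"
  shows "abs_trace p d y \<in> F"
proof -
  have yd: "y ^ (p ^ d) = y" using finite_field_pow_card[of y] card by simp
  have "(abs_trace p d y) ^ p = (\<Sum>i<d. (y ^ (p ^ i)) ^ p)"
    unfolding abs_trace_def by (rule freshmans_dream_sum[OF prime_char char_p[symmetric]])
  also have "\<dots> = (\<Sum>i<d. y ^ (p ^ Suc i))" by (simp add: power_mult[symmetric] mult.commute)
  also have "\<dots> = (\<Sum>i<d. y ^ (p ^ i))" by (rule sum_shift_cyclic[of "\<lambda>i. y ^ (p ^ i)"]) (simp add: yd)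
  finally show ?thesis unfolding inF abs_trace_def .
qed

lemma trace_hom:
  assumes "c \<in> F"
  shows "abs_trace p d (c * y) = c * abs_trace p d y"
  unfolding abs_trace_def sum_distrib_left
  by (intro sum.cong refl) (simp add: power_mult_distrib F_pow[OF assms])

lemma sqrt_exists:
  assumes card: "CARD('a) = p ^ d" and ev: "even d" and c: "c \<in> F - {0}"
  shows "\<exists>t. t \<noteq> 0 \<and> t * t = c"
proof -
  define n where "n = p ^ d"
  define h where "h = (n - 1) div 2"
  have n_odd: "odd n" unfolding n_def using odd_p by simp
  have n_ge: "n \<ge> 3"
  proof -
    have "d \<noteq> 0"
    proof
      assume "d = 0" then have "CARD('a) = 1" using card by simp
      moreover have "card {0::'a, 1} \<le> CARD('a)" by (rule card_mono) auto
      ultimately show False by simp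
    qed
    then have "p ^ d \<ge> p ^ 1" using p_gt2 by (intro power_increasing) auto
    then show ?thesis using p_gt2 unfolding n_def by simp
  qed
  have n2h: "n - 1 = 2 * h" unfolding h_def using n_odd by simp
  have h1: "h \<ge> 1" using n_ge n2h by simp
  have dvd: "(p - 1) dvd h"
  proof -
    have pp: "p ^ 2 - 1 = 2 * (p - 1) * ((p + 1) div 2)"
    proof -
      have "p ^ 2 - 1 = (p - 1) * (p + 1)" by (simp add: power2_eq_square algebra_simps)
      also have "p + 1 = 2 * ((p + 1) div 2)" using odd_p by simp
      finally show ?thesis by simp
    qed
    have "[p ^ 2 = 1] (mod 2 * (p - 1))"
      using pp p_gt2 by (subst cong_altdef_nat) (auto simp: one_le_power)
    then have "[(p ^ 2) ^ (d div 2) = 1 ^ (d div 2)] (mod 2 * (p - 1))" by (rule cong_pow)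
    moreover have "(p ^ 2) ^ (d div 2) = n" unfolding n_def using ev by (simp add: power_mult[symmetric])
    ultimately have "[n = 1] (mod 2 * (p - 1))" by simp
    then have "2 * (p - 1) dvd n - 1" using n_ge by (subst (asm) cong_altdef_nat) auto
    then show ?thesis using n2h by auto
  qed
  then obtain r where r: "h = (p - 1) * r" by blast
  have ch: "c ^ h = 1" using F_fermat[of c] c by (simp add: r power_mult)
  define R where "R = {z::'a. z ^ h = 1}"
  define Sq where "Sq = (\<lambda>x::'a. x * x) ` (UNIV - {0})"
  have xn1: "x ^ (n - 1) = 1" if "x \<noteq> 0" for x :: 'a
  proof -
    have "x * x ^ (n - 1) = x * 1"
    proof -
      have "x ^ n = x" using finite_field_pow_card[of x] card n_def by simp
      moreover have "x ^ n = x * x ^ (n - 1)" using n_ge by (metis Suc_diff_1 power_Suc less_le_trans zero_less_numeral)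
      ultimately show ?thesis by simp
    qed
    then show ?thesis using that by simp
  qed
  have SqR: "Sq \<subseteq> R"
  proof
    fix z assume "z \<in> Sq"
    then obtain x where x: "x \<noteq> 0" "z = x * x" unfolding Sq_def by auto
    have "z ^ h = x ^ (2 * h)" using x by (simp add: power_mult power2_eq_square)
    also have "\<dots> = 1" using xn1[OF x(1)] n2h by simp
    finally show "z \<in> R" unfolding R_def by simp
  qed
  have cR: "card R \<le> h" unfolding R_def using card_pow_eq_le h1 by blast
  have "card (UNIV - {0::'a}) \<le> card (\<Union>z\<in>Sq. {x::'a. x ^ 2 = z})"
    by (rule card_mono) (auto simp: Sq_def power2_eq_square)
  also have "\<dots> \<le> (\<Sum>z\<in>Sq. card {x::'a. x ^ 2 = z})" by (rule card_UN_le) simp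
  also have "\<dots> \<le> (\<Sum>z\<in>Sq. 2)" by (intro sum_mono card_pow_eq_le) simp
  also have "\<dots> = 2 * card Sq" by simp
  finally have "card (UNIV - {0::'a}) \<le> 2 * card Sq" .
  moreover have "card (UNIV - {0::'a}) = n - 1" using card n_def by (simp add: card_Diff_singleton)
  ultimately have "h \<le> card Sq" using n2h by simp
  then have "card R \<le> card Sq" using cR by simp
  then have "Sq = R" by (intro card_seteq[OF _ SqR]) simp
  moreover have "c \<in> R" unfolding R_def using ch by simp
  ultimately have "c \<in> Sq" by simp
  then show ?thesis unfolding Sq_def by auto
qed

lemma root_pow_p2:
  assumes c: "c \<in> F - {0}" and t: "t * t = c"
  shows "t ^ (p ^ 2) = t"
proof -
  have pp: "p ^ 2 - 1 = (p - 1) * (2 * ((p + 1) div 2))"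
  proof -
    have "p ^ 2 - 1 = (p - 1) * (p + 1)" by (simp add: power2_eq_square algebra_simps)
    also have "p + 1 = 2 * ((p + 1) div 2)" using odd_p by simp
    finally show ?thesis by simp
  qed
  have "t ^ (p ^ 2 - 1) = ((t ^ 2) ^ (p - 1)) ^ ((p + 1) div 2)"
    unfolding pp by (simp add: power_mult[symmetric] mult.commute mult.left_commute)
  also have "\<dots> = 1" using F_fermat[of c] c t by (simp add: power2_eq_square)
  finally have 1: "t ^ (p ^ 2 - 1) = 1" .
  have "p ^ 2 = Suc (p ^ 2 - 1)" using p_gt2 by simp
  then have "t ^ (p ^ 2) = t * t ^ (p ^ 2 - 1)" by (metis power_Suc)
  then show ?thesis using 1 by simp
qed

lemma pow_iter:
  fixes t :: 'a
  assumes "t ^ P = t"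
  shows "t ^ (P ^ j) = t"
proof (induction j)
  case (Suc j)
  have "t ^ (P ^ Suc j) = (t ^ P) ^ (P ^ j)" by (simp only: power_Suc power_mult)
  then show ?case using assms Suc by simp
qed simp

end



lemma final_alg:
  fixes G X a b :: complex and d :: nat
  assumes G2: "G ^ 2 = X" and Xq: "X \<in> \<rat>" and X0: "X \<noteq> 0" and a: "a \<in> \<rat>" and b: "b \<in> \<rat>"
  shows "\<exists>\<alpha> \<beta>. \<alpha> \<in> \<rat> \<and> \<beta> \<in> \<rat> \<and> -1 / G ^ d * (a + b * G) = \<alpha> + \<beta> * G"
proof -
  have G0: "G \<noteq> 0" using G2 X0 by auto
  obtain m where m: "d = 2 * m \<or> d = 2 * m + 1" by (metis oddE evenE)
  then show ?thesis
  proof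
    assume d: "d = 2 * m"
    have Gd: "G ^ d = X ^ m" using G2 d by (simp add: power_mult)
    have Xm: "X ^ m \<noteq> 0" using X0 by simp
    have "-1 / G ^ d * (a + b * G) = (- a / X ^ m) + (- b / X ^ m) * G"
      unfolding Gd using Xm by (simp add: field_simps)
    moreover have "- a / X ^ m \<in> \<rat>" "- b / X ^ m \<in> \<rat>" using a b Xq by auto
    ultimately show ?thesis by blast
  next
    assume d: "d = 2 * m + 1"
    have Gd: "G ^ d = X ^ m * G" using G2 d by (simp add: power_mult power_add)
    have Xm: "X ^ m \<noteq> 0" using X0 by simp
    have "-1 / G ^ d * (a + b * G) = (- b / X ^ m) + (- a / X ^ (m + 1)) * G"
      unfolding Gd using Xm X0 G0 G2 by (simp add: field_simps power2_eq_square)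
    moreover have "- b / X ^ m \<in> \<rat>" "- a / X ^ (m + 1) \<in> \<rat>" using a b Xq by auto
    ultimately show ?thesis by blast
  qed
qed

lemma final_alg_Q:
  fixes G X s :: complex and d :: nat
  assumes G2: "G ^ 2 = X" and Xq: "X \<in> \<rat>" and ev: "even d" and s: "s \<in> \<rat>"
  shows "-1 / G ^ d * s \<in> \<rat>"
proof -
  obtain m where d: "d = 2 * m" using ev by blast
  have Gd: "G ^ d = X ^ m" using G2 d by (simp add: power_mult)
  show ?thesis unfolding Gd using Xq s by auto
qed

lemma in_quad:
  fixes G :: complex
  assumes G2: "G ^ 2 = of_int ((-1) ^ ((p - 1) div 2) * int p)" and a: "\<alpha> \<in> \<rat>" and b: "\<beta> \<in> \<rat>"
  shows "\<alpha> + \<beta> * G \<in> quad_subfield p"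
proof -
  define r where "r = csqrt (of_int ((-1) ^ ((p - 1) div 2) * int p))"
  have "r ^ 2 = G ^ 2" unfolding r_def G2 by simp
  then have "(G - r) * (G + r) = 0" by (simp add: power2_eq_square algebra_simps)
  then have Gr: "G = r \<or> G = - r" by (auto simp: add_eq_0_iff)
  obtain a' where a': "\<alpha> = of_rat a'" using a Rats_cases by blast
  obtain b' where b': "\<beta> = of_rat b'" using b Rats_cases by blast
  from Gr show ?thesis
  proof
    assume "G = r" then show ?thesis unfolding quad_subfield_def r_def a' b' by blast
  next
    assume "G = - r"
    then have "\<alpha> + \<beta> * G = of_rat a' + of_rat (- b') * r" unfolding a' b' by (simp add: of_rat_minus)
    then show ?thesis unfolding quad_subfield_def r_def by blast
  qed
qed




theorem mainTheorem12:
  fixes p k d n :: nat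
    and \<psi> :: "'a::{finite,field} \<Rightarrow> complex"
    and a :: "nat \<Rightarrow> 'a" and f :: "'a \<Rightarrow> 'a"
  assumes "prime p" and "odd p"
    and "CHAR('a) = p"
    and "CARD('a) = p ^ d"
    and "k \<ge> 1"
    and psi_add: "\<forall>x\<in>range of_nat. \<forall>y\<in>range of_nat. \<psi> (x + y) = \<psi> x * \<psi> y"
    and psi_nontriv: "\<exists>x\<in>range of_nat. \<psi> x \<noteq> 1"
    and f_def: "\<And>x. f x = (\<Sum>i\<le>n. a i * x ^ (((p ^ k) ^ i + 1) div 2))"
  defines "S_plus \<equiv> - 1 / (gauss_Fp p \<psi>) ^ d * (\<Sum>x\<in>UNIV. \<psi> (abs_trace p d (f x)))"
    and "S_minus \<equiv> - 1 / (gauss_Fp p \<psi>) ^ d * (\<Sum>x\<in>UNIV. \<psi> (abs_trace p d (f x)) * quad_char x)"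
  shows "S_plus \<in> quad_subfield p \<and> S_minus \<in> quad_subfield p
     \<and> (even k \<and> k dvd d \<longrightarrow> S_plus \<in> \<rat> \<and> S_minus \<in> \<rat>)"
proof -
  note pp = assms(1) and op = assms(2) and cp = assms(3) and card = assms(4)
  have d1: "d \<noteq> 0"
  proof
    assume "d = 0" then have "CARD('a) = 1" using card by simp
    moreover have "card {0::'a, 1} \<le> CARD('a)" by (rule card_mono) auto
    ultimately show False by simp
  qed
  have zero_in: "(0::'a) \<in> range of_nat" by (metis of_nat_0 rangeI)
  have q0: "0 \<in> quad_subfield p" unfolding quad_subfield_def
    by (rule CollectI, rule exI[of _ 0], rule exI[of _ 0]) simp
  show ?thesis
  proof (cases "\<psi> 0 = 1")
    case False
    have "\<psi> 0 = \<psi> 0 * \<psi> 0" using psi_add zero_in by (metis add_0)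
    then have p00: "\<psi> 0 = 0" using False by (metis mult_cancel_left1)
    have psiz: "\<psi> y = 0" if "y \<in> range of_nat" for y
      using psi_add that zero_in p00 by (metis add_0_right mult_zero_right)
    have "gauss_Fp p \<psi> = 0" unfolding gauss_Fp_def by (intro sum.neutral) (simp add: psiz)
    then have "S_plus = 0" "S_minus = 0" unfolding S_plus_def S_minus_def using d1 by simp_all
    then show ?thesis using q0 by simp
  next
    case True
    interpret gs p "undefined :: 'a" \<psi>
      by unfold_locales (use pp op cp psi_add psi_nontriv True in auto)
    define T where "T x = abs_trace p d (f x)" for x
    define qcI :: "'a \<Rightarrow> int" where "qcI x = (if x = 0 then 0 else if (\<exists>y. y ^ 2 = x) then 1 else -1)" for x
    have TF: "T x \<in> F" for x unfolding T_def by (rule trace_F[OF card])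
    have qc: "quad_char x = of_int (qcI x)" for x unfolding quad_char_def qcI_def by simp
    have Splus_sum: "(\<Sum>x\<in>UNIV. \<psi> (T x) * of_int ((\<lambda>x. 1::int) x)) = (\<Sum>x\<in>UNIV. \<psi> (abs_trace p d (f x)))"
      unfolding T_def by simp
    have Sminus_sum: "(\<Sum>x\<in>UNIV. \<psi> (T x) * of_int (qcI x)) = (\<Sum>x\<in>UNIV. \<psi> (abs_trace p d (f x)) * quad_char x)"
      unfolding T_def qc by simp
    have hom: "T (c * x) = c * T x \<and> qcI (c * x) = qcI x"
      if cF: "c \<in> F" and t0: "t \<noteq> 0" and tc: "t * t = c" and tQ: "\<And>i. t ^ ((p ^ k) ^ i) = t" for c t x
    proof -
      have ex: "c ^ (((p ^ k) ^ i + 1) div 2) = c" for i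
        unfolding tc[symmetric] by (rule pow_half_exp[OF tQ]) (simp add: op)
      have "f (c * x) = c * f x" unfolding f_def by (rule f_hom[OF ex])
      then have "T (c * x) = c * T x" unfolding T_def using trace_hom[OF cF] by simp
      moreover have "qcI (c * x) = qcI x" unfolding qcI_def tc[symmetric] by (rule qc_ok[OF t0])
      ultimately show ?thesis by simp
    qed
    have invK: "T (c * x) = c * T x \<and> w (c * x) = w x"
      if "c \<in> F - {0}" "chi c = 1" "w = (\<lambda>x. 1) \<or> w = qcI" for c x w
    proof -
      have cF: "c \<in> F" using that(1) by simp
      from chi_sqrt[OF cF that(2)] obtain t where t: "t \<in> F" "t \<noteq> 0" "t * t = c" by blast
      have tQ: "t ^ ((p ^ k) ^ i) = t" for i using F_pow[OF t(1), of "k * i"] by (simp add: power_mult)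
      show ?thesis using hom[OF _ t(2) t(3) tQ] that by auto
    qed
    have G2: "G ^ 2 = of_int ((-1) ^ ((p - 1) div 2) * int p)"
      using G_sq chi_minus1 by simp
    have Xq: "(of_int ((-1) ^ ((p - 1) div 2) * int p) :: complex) \<in> \<rat>" by simp
    have X0: "(of_int ((-1) ^ ((p - 1) div 2) * int p) :: complex) \<noteq> 0" using p_gt2 by simp
    have gG: "gauss_Fp p \<psi> = G" by (rule gauss_eq)
    have main: "-1 / G ^ d * (\<Sum>x\<in>UNIV. \<psi> (T x) * of_int (w x)) \<in> quad_subfield p"
      if w: "w = (\<lambda>x. 1) \<or> w = qcI" for w
    proof -
      obtain aa bb where ab: "aa \<in> \<rat>" "bb \<in> \<rat>" "(\<Sum>x\<in>UNIV. \<psi> (T x) * of_int (w x)) = aa + bb * G"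
        using K_form[of T w] TF invK w by blast
      obtain \<alpha> \<beta> where "\<alpha> \<in> \<rat>" "\<beta> \<in> \<rat>" "-1 / G ^ d * (aa + bb * G) = \<alpha> + \<beta> * G"
        using final_alg[OF G2 Xq X0 ab(1,2)] by blast
      then show ?thesis using ab(3) in_quad[OF G2] by simp
    qed
    have ratl: "-1 / G ^ d * (\<Sum>x\<in>UNIV. \<psi> (T x) * of_int (w x)) \<in> \<rat>"
      if w: "w = (\<lambda>x. 1) \<or> w = qcI" and kev: "even k" and kd: "k dvd d" for w
    proof -
      have dev: "even d" using kev kd by (metis dvd_trans)
      have inv: "T (c * x) = c * T x \<and> w (c * x) = w x" if c: "c \<in> F - {0}" for c x
      proof -
        obtain t where t: "t \<noteq> 0" "t * t = c" using sqrt_exists[OF card dev c] by blast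
        have tp2: "t ^ (p ^ 2) = t" by (rule root_pow_p2[OF c t(2)])
        have tQ: "t ^ ((p ^ k) ^ i) = t" for i
        proof -
          obtain k' where k': "k = 2 * k'" using kev by blast
          have "(p ^ k) ^ i = (p ^ 2) ^ (k' * i)" unfolding k' by (simp add: power_mult)
          then show ?thesis using pow_iter[OF tp2, of "k' * i"] by simp
        qed
        show ?thesis using hom[OF _ t tQ] c w by auto
      qed
      have "(\<Sum>x\<in>UNIV. \<psi> (T x) * of_int (w x)) \<in> \<rat>" by (rule Q_form[OF TF inv])
      then show ?thesis by (rule final_alg_Q[OF G2 Xq dev])
    qed
    have "S_plus = -1 / G ^ d * (\<Sum>x\<in>UNIV. \<psi> (T x) * of_int ((\<lambda>x. 1::int) x))"
      unfolding S_plus_def gG Splus_sum ..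
    moreover have "S_minus = -1 / G ^ d * (\<Sum>x\<in>UNIV. \<psi> (T x) * of_int (qcI x))"
      unfolding S_minus_def gG Sminus_sum ..
    ultimately show ?thesis using main ratl by blast
  qed
qed


end
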